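(* Let $\Omega\subset B(\mathcal H)^d$ be an NC domain with exhausting sequence $\{\Omega_k\}$, and let $f:\Omega\to B(\mathcal H)^r$ be an NC function. Then: (a) for each $k$, $f(\Omega_k)$ is norm-bounded; (b) if $x_1,x_2,\dots$ is a sequence in $\Omega$ of length $l\in\mathbb N\cup\{\infty\}$ and $s:\mathcal H\to\mathcal H^{(l)}$ is a bounded invertible linear map with $s^{-1}\big(\bigoplus_n x_n\big)s\in\Omega$, then $\sup_n\|f(x_n)\|<\infty$ and $$f\Big(s^{-1}\Big(\bigoplus_n x_n\Big)s\Big)=s^{-1}\Big(\bigoplus_n f(x_n)\Big)s.$$
   Context: Throughout, $\mathcal H$ is an infinite-dimensional separable complex Hilbert space, $B(\mathcal H)$ the bounded operators with the operator norm, and $\mathcal H^{(l)}$ ($l\in\mathbb N\cup\{\infty\}$) the direct sum of $l$ copies of $\mathcal H$. $B(\mathcal H)^d$ has the norm $\|x\|=\max_i\|x^i\|$. Operations on tuples are componentwise: for bounded invertible linear $s:\mathcal H\to\mathcal H^{(l)}$ and $z\in B(\mathcal H^{(l)})^d$, $s^{-1}zs=(s^{-1}z^1s,\dots,s^{-1}z^ds)$; for a finite or countable sequence $x_1,x_2,\dots$ in $B(\mathcal H)^d$ of length $l$ (uniformly bounded when $l=\infty$), $\bigoplus_n x_n\in B(\mathcal H^{(l)})^d$ has $i$-th entry $\bigoplus_n x_n^i$; block matrices of tuples are defined entrywise per coordinate. A set is unitarily invariant if $u^*xu$ lies in it for each of its elements $x$ and each unitary $u\in B(\mathcal H)$. NC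 domain: $\Omega\subset B(\mathcal H)^d$ is an NC domain if there are subsets $\Omega_1,\Omega_2,\dots$ of $\Omega$ (an exhausting sequence) with (1) $\Omega_k\subset\mathrm{int}\,\Omega_{k+1}$ (norm interior) and $\Omega=\bigcup_k\Omega_k$; (2) each $\Omega_k$ norm-bounded and unitarily invariant; (3) for every sequence $x_1,x_2,\dots$ in $\Omega_k$ of length $l\in\mathbb N\cup\{\infty\}$ there is a unitary $u:\mathcal H\to\mathcal H^{(l)}$ with $u^{-1}(\bigoplus_n x_n)u\in\Omega_k$. NC function: $f:\Omega\to B(\mathcal H)^r$ on an NC domain is NC if whenever $x,y\in\Omega$ and $s:\mathcal H\to\mathcal H^{(2)}$ is bounded, linear, invertible with $s^{-1}\begin{bmatrix}x&0\\0&y\end{bmatrix}s\in\Omega$, then $f\Big(s^{-1}\begin{bmatrix}x&0\\0&y\end{bmatrix}s\Big)=s^{-1}\begin{bmatrix}f(x)&0\\0&f(y)\end{bmatrix}s$. *)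

theory Defs
  imports "HOL-Analysis.Analysis" "HOL-Library.Extended_Nat"
begin

text \<open>Concrete model: the infinite-dimensional separable complex Hilbert space H is
  l2(nat); vectors of an l2 space over an index set I are functions 'i => complex
  vanishing outside I and square-summable on I.  Bounded operators are represented
  as functions on all of 'i => complex that are linear and bounded on the l2 space
  and send everything outside the l2 space to 0 (so that HOL equality is operator
  equality).\<close>

definition l2v :: "'i set \<Rightarrow> ('i \<Rightarrow> complex) set" where
  "l2v I = {x. (\<forall>i. i \<notin> I \<longrightarrow> x i = 0) \<and> (\<lambda>i. (cmod (x i))^2) summable_on I}"

definition vnorm :: "('i \<Rightarrow> complex) \<Rightarrow> real" where
  "vnorm x = sqrt (\<Sum>\<^sub>\<infinity>i. (cmod (x i))^2)"

definition bop :: "'i set \<Rightarrow> 'j set \<Rightarrow> (('i \<Rightarrow> complex) \<Rightarrow> ('j \<Rightarrow> complex)) set" where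
  "bop I J = {T. (\<forall>x\<in>l2v I. T x \<in> l2v J)
     \<and> (\<forall>x\<in>l2v I. \<forall>y\<in>l2v I. \<forall>a b. T (\<lambda>i. a * x i + b * y i) = (\<lambda>j. a * T x j + b * T y j))
     \<and> (\<exists>C. \<forall>x\<in>l2v I. vnorm (T x) \<le> C * vnorm x)
     \<and> (\<forall>x. x \<notin> l2v I \<longrightarrow> T x = (\<lambda>_. 0))}"

definition oid :: "'i set \<Rightarrow> ('i \<Rightarrow> complex) \<Rightarrow> ('i \<Rightarrow> complex)" where
  "oid I = (\<lambda>x. if x \<in> l2v I then x else (\<lambda>_. 0))"

definition binvertible :: "'i set \<Rightarrow> 'j set \<Rightarrow> (('i \<Rightarrow> complex) \<Rightarrow> ('j \<Rightarrow> complex)) \<Rightarrow> bool" where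
  "binvertible I J s \<longleftrightarrow> s \<in> bop I J \<and> (\<exists>t\<in>bop J I. t \<circ> s = oid I \<and> s \<circ> t = oid J)"

definition binv :: "'i set \<Rightarrow> 'j set \<Rightarrow> (('i \<Rightarrow> complex) \<Rightarrow> ('j \<Rightarrow> complex))
    \<Rightarrow> (('j \<Rightarrow> complex) \<Rightarrow> ('i \<Rightarrow> complex))" where
  "binv I J s = (SOME t. t \<in> bop J I \<and> t \<circ> s = oid I \<and> s \<circ> t = oid J)"

definition unitary_op :: "'i set \<Rightarrow> 'j set \<Rightarrow> (('i \<Rightarrow> complex) \<Rightarrow> ('j \<Rightarrow> complex)) \<Rightarrow> bool" where
  "unitary_op I J u \<longleftrightarrow> u \<in> bop I J \<and> (\<forall>x\<in>l2v I. vnorm (u x) = vnorm x) \<and> u ` l2v I = l2v J"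

definition opnorm :: "'i set \<Rightarrow> (('i \<Rightarrow> complex) \<Rightarrow> ('j \<Rightarrow> complex)) \<Rightarrow> real" where
  "opnorm I T = Sup ((\<lambda>x. vnorm (T x)) ` {x \<in> l2v I. vnorm x \<le> 1})"

type_synonym vec = "nat \<Rightarrow> complex"
type_synonym hop = "vec \<Rightarrow> vec"   \<comment> \<open>elements of B(H) (when in bop UNIV UNIV)\<close>
type_synonym 'd tup = "'d \<Rightarrow> hop"  \<comment> \<open>elements of B(H)^d, d = CARD('d)\<close>

definition BH :: "hop set" where "BH = bop UNIV UNIV"

definition BHt :: "('d \<Rightarrow> hop) set" where "BHt = {x. \<forall>i. x i \<in> BH}"

definition tnorm :: "('d::finite) tup \<Rightarrow> real" where
  "tnorm x = Max (range (\<lambda>i. opnorm UNIV (x i)))"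

definition tdist :: "('d::finite) tup \<Rightarrow> 'd tup \<Rightarrow> real" where
  "tdist x y = tnorm (\<lambda>i v j. x i v j - y i v j)"

text \<open>index set of H^(l): copy index n (with n < l), then coordinate in H\<close>
definition Hl :: "enat \<Rightarrow> (nat \<times> nat) set" where
  "Hl l = {(n, j). enat n < l}"

definition dsum :: "enat \<Rightarrow> (nat \<Rightarrow> hop) \<Rightarrow> ((nat \<times> nat \<Rightarrow> complex) \<Rightarrow> (nat \<times> nat \<Rightarrow> complex))" where
  "dsum l xs = (\<lambda>v. if v \<in> l2v (Hl l)
      then (\<lambda>(n, j). if enat n < l then xs n (\<lambda>i. v (n, i)) j else 0) else (\<lambda>_. 0))"

definition tdsum :: "enat \<Rightarrow> (nat \<Rightarrow> 'd tup) \<Rightarrow> 'd \<Rightarrow> ((nat \<times> nat \<Rightarrow> complex) \<Rightarrow> (nat \<times> nat \<Rightarrow> complex))" where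
  "tdsum l xs = (\<lambda>i. dsum l (\<lambda>n. xs n i))"

definition tconj :: "enat \<Rightarrow> ((nat \<Rightarrow> complex) \<Rightarrow> (nat \<times> nat \<Rightarrow> complex))
    \<Rightarrow> ('d \<Rightarrow> ((nat \<times> nat \<Rightarrow> complex) \<Rightarrow> (nat \<times> nat \<Rightarrow> complex))) \<Rightarrow> 'd tup" where
  "tconj l s z = (\<lambda>i. binv UNIV (Hl l) s \<circ> z i \<circ> s)"

definition unitarily_invariant :: "'d tup set \<Rightarrow> bool" where
  "unitarily_invariant A \<longleftrightarrow> (\<forall>x\<in>A. \<forall>u. unitary_op UNIV UNIV u \<longrightarrow>
      (\<lambda>i. binv UNIV UNIV u \<circ> x i \<circ> u) \<in> A)"

definition norm_interior :: "('d::finite) tup set \<Rightarrow> 'd tup set" where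
  "norm_interior A = {x \<in> A. \<exists>e>0. \<forall>y\<in>BHt. tdist y x < e \<longrightarrow> y \<in> A}"

text \<open>Omk is an exhausting sequence for the NC domain Om (k indexed from 0)\<close>
definition exhausting_seq :: "('d::finite) tup set \<Rightarrow> (nat \<Rightarrow> 'd tup set) \<Rightarrow> bool" where
  "exhausting_seq Om Omk \<longleftrightarrow>
     Om \<subseteq> BHt \<and> (\<forall>k. Omk k \<subseteq> Om)
   \<and> (\<forall>k. Omk k \<subseteq> norm_interior (Omk (Suc k))) \<and> Om = (\<Union>k. Omk k)
   \<and> (\<forall>k. \<exists>C. \<forall>x\<in>Omk k. tnorm x \<le> C) \<and> (\<forall>k. unitarily_invariant (Omk k))
   \<and> (\<forall>k. \<forall>l xs. l \<noteq> 0 \<longrightarrow> (\<forall>n. enat n < l \<longrightarrow> xs n \<in> Omk k) \<longrightarrow>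
        (\<exists>u. unitary_op UNIV (Hl l) u \<and> tconj l u (tdsum l xs) \<in> Omk k))"

definition nc_domain :: "('d::finite) tup set \<Rightarrow> bool" where
  "nc_domain Om \<longleftrightarrow> (\<exists>Omk. exhausting_seq Om Omk)"

definition nc_function :: "('d::finite) tup set \<Rightarrow> ('d tup \<Rightarrow> ('r::finite) tup) \<Rightarrow> bool" where
  "nc_function Om f \<longleftrightarrow> nc_domain Om \<and> (\<forall>x\<in>Om. f x \<in> BHt)
   \<and> (\<forall>x\<in>Om. \<forall>y\<in>Om. \<forall>s. binvertible UNIV (Hl 2) s \<longrightarrow>
        tconj 2 s (tdsum 2 (\<lambda>n. if n = 0 then x else y)) \<in> Om \<longrightarrow>
        f (tconj 2 s (tdsum 2 (\<lambda>n. if n = 0 then x else y)))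
          = tconj 2 s (tdsum 2 (\<lambda>n. if n = 0 then f x else f y)))"

end

theory Submission
  imports Defs
begin

definition vn2 :: "('i \<Rightarrow> complex) \<Rightarrow> real" where
  "vn2 x = (\<Sum>\<^sub>\<infinity>i. (cmod (x i))^2)"

lemma vnorm_vn2: "vnorm x = sqrt (vn2 x)" by (simp add: vnorm_def vn2_def)

lemma vn2_nonneg: "vn2 x \<ge> 0" unfolding vn2_def by (rule infsum_nonneg) simp

lemma l2v_iff: "x \<in> l2v I \<longleftrightarrow> (\<forall>i. i \<notin> I \<longrightarrow> x i = 0) \<and> (\<lambda>i. (cmod (x i))^2) summable_on UNIV"
proof -
  have "(\<forall>i. i \<notin> I \<longrightarrow> x i = 0) \<Longrightarrow> ((\<lambda>i. (cmod (x i))^2) summable_on I \<longleftrightarrow> (\<lambda>i. (cmod (x i))^2) summable_on UNIV)"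
    by (rule summable_on_cong_neutral) simp_all
  then show ?thesis unfolding l2v_def by blast
qed

lemma l2v_summ: "x \<in> l2v I \<Longrightarrow> (\<lambda>i. (cmod (x i))^2) summable_on UNIV"
  unfolding l2v_iff by (rule conjunct2)
lemma l2v_out: "x \<in> l2v I \<Longrightarrow> i \<notin> I \<Longrightarrow> x i = 0"
  unfolding l2v_iff by simp

lemma zero_l2v[simp]: "(\<lambda>_. 0) \<in> l2v I"
  unfolding l2v_def by simp

lemma vn2_zero[simp]: "vn2 (\<lambda>_. 0) = 0" by (simp add: vn2_def)

lemma sq_ineq: "(cmod (a * x + b * y))^2 \<le> 2 * (cmod a)^2 * (cmod x)^2 + 2 * (cmod b)^2 * (cmod y)^2"
proof -
  have "cmod (a * x + b * y) \<le> cmod a * cmod x + cmod b * cmod y"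
    by (metis norm_mult norm_triangle_ineq)
  hence "(cmod (a * x + b * y))^2 \<le> (cmod a * cmod x + cmod b * cmod y)^2"
    by (simp add: power_mono)
  also have "\<dots> \<le> 2 * (cmod a * cmod x)^2 + 2 * (cmod b * cmod y)^2"
    using sum_squares_ge_zero[of "cmod a * cmod x - cmod b * cmod y" 0]
    by (simp add: power2_eq_square algebra_simps)
  finally show ?thesis by (simp add: power_mult_distrib)
qed

lemma lin_summ:
  assumes "x \<in> l2v I" "y \<in> l2v I"
  shows "(\<lambda>i. (cmod (a * x i + b * y i))^2) summable_on UNIV"
    and "vn2 (\<lambda>i. a * x i + b * y i) \<le> 2 * (cmod a)^2 * vn2 x + 2 * (cmod b)^2 * vn2 y"
proof -
  have s: "(\<lambda>i. 2 * (cmod a)^2 * (cmod (x i))^2 + 2 * (cmod b)^2 * (cmod (y i))^2) summable_on UNIV"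
    using l2v_summ[OF assms(1)] l2v_summ[OF assms(2)] by (intro summable_on_add summable_on_cmult_right)
  show s2: "(\<lambda>i. (cmod (a * x i + b * y i))^2) summable_on UNIV"
    by (rule summable_on_comparison_test[OF s]) (simp_all add: sq_ineq)
  have "vn2 (\<lambda>i. a * x i + b * y i) \<le> (\<Sum>\<^sub>\<infinity>i. 2 * (cmod a)^2 * (cmod (x i))^2 + 2 * (cmod b)^2 * (cmod (y i))^2)"
    unfolding vn2_def by (rule infsum_mono[OF s2 s]) (simp add: sq_ineq)
  also have "\<dots> = 2 * (cmod a)^2 * vn2 x + 2 * (cmod b)^2 * vn2 y"
    unfolding vn2_def
    using l2v_summ[OF assms(1)] l2v_summ[OF assms(2)]
    by (subst infsum_add) (auto intro!: summable_on_cmult_right simp: infsum_cmult_right)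
  finally show "vn2 (\<lambda>i. a * x i + b * y i) \<le> 2 * (cmod a)^2 * vn2 x + 2 * (cmod b)^2 * vn2 y" .
qed

lemma lin_l2v: "x \<in> l2v I \<Longrightarrow> y \<in> l2v I \<Longrightarrow> (\<lambda>i. a * x i + b * y i) \<in> l2v I"
  unfolding l2v_iff[of "\<lambda>i. a * x i + b * y i"] using lin_summ(1)[of x I y a b] by (simp add: l2v_out)

lemma coord_le: assumes "x \<in> l2v I" shows "(cmod (x i))^2 \<le> vn2 x"
proof -
  have "(\<Sum>\<^sub>\<infinity>j\<in>{i}. (cmod (x j))^2) \<le> (\<Sum>\<^sub>\<infinity>j. (cmod (x j))^2)"
    by (rule infsum_mono2) (auto intro: l2v_summ[OF assms])
  thus ?thesis by (simp add: vn2_def)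
qed

lemma vn2_zero_iff: assumes "x \<in> l2v I" "vn2 x = 0" shows "x = (\<lambda>_. 0)"
proof
  fix i show "x i = 0" using coord_le[OF assms(1), of i] assms(2)
    by simp
qed


lemma bop_in: "T \<in> bop I J \<Longrightarrow> x \<in> l2v I \<Longrightarrow> T x \<in> l2v J"
  unfolding bop_def by simp
lemma bop_out: "T \<in> bop I J \<Longrightarrow> x \<notin> l2v I \<Longrightarrow> T x = (\<lambda>_. 0)"
  unfolding bop_def by simp
lemma bop_lin: "T \<in> bop I J \<Longrightarrow> x \<in> l2v I \<Longrightarrow> y \<in> l2v I \<Longrightarrow>
    T (\<lambda>i. a * x i + b * y i) = (\<lambda>j. a * T x j + b * T y j)"
  unfolding bop_def by simp
lemma bop_zero: assumes "T \<in> bop I J" shows "T (\<lambda>_. 0) = (\<lambda>_. 0)"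
  using bop_lin[OF assms zero_l2v zero_l2v, of 0 0] by simp
lemma bop_add: "T \<in> bop I J \<Longrightarrow> x \<in> l2v I \<Longrightarrow> y \<in> l2v I \<Longrightarrow>
    T (\<lambda>i. x i + y i) = (\<lambda>j. T x j + T y j)"
  using bop_lin[of T I J x y 1 1] by simp
lemma bop_diff: "T \<in> bop I J \<Longrightarrow> x \<in> l2v I \<Longrightarrow> y \<in> l2v I \<Longrightarrow>
    T (\<lambda>i. x i - y i) = (\<lambda>j. T x j - T y j)"
  using bop_lin[of T I J x y 1 "-1"] by simp

lemma bop_bound2: assumes "T \<in> bop I J" shows "\<exists>C\<ge>0. \<forall>x\<in>l2v I. vn2 (T x) \<le> C * vn2 x"
proof -
  have "\<exists>C. \<forall>x\<in>l2v I. vnorm (T x) \<le> C * vnorm x" using assms by (simp add: bop_def)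
  then obtain C where C: "\<forall>x\<in>l2v I. vnorm (T x) \<le> C * vnorm x" by blast
  show ?thesis
  proof (intro exI[of _ "(max C 0)^2"] conjI ballI)
    fix x assume x: "x \<in> l2v I"
    have "C * sqrt (vn2 x) \<le> max C 0 * sqrt (vn2 x)"
      by (rule mult_right_mono) (auto simp: vn2_nonneg)
    hence "sqrt (vn2 (T x)) \<le> max C 0 * sqrt (vn2 x)"
      using C x unfolding vnorm_vn2 by (meson order_trans)
    hence "(sqrt (vn2 (T x)))^2 \<le> (max C 0 * sqrt (vn2 x))^2"
      by (intro power_mono) (auto simp: vn2_nonneg)
    thus "vn2 (T x) \<le> (max C 0)^2 * vn2 x"
      by (simp add: power_mult_distrib vn2_nonneg)
  qed simp
qed

lemma bopI:
  assumes "\<And>x. x \<in> l2v I \<Longrightarrow> T x \<in> l2v J"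
    and "\<And>x y a b. x \<in> l2v I \<Longrightarrow> y \<in> l2v I \<Longrightarrow> T (\<lambda>i. a * x i + b * y i) = (\<lambda>j. a * T x j + b * T y j)"
    and "\<And>x. x \<in> l2v I \<Longrightarrow> vn2 (T x) \<le> C * vn2 x"
    and "\<And>x. x \<notin> l2v I \<Longrightarrow> T x = (\<lambda>_. 0)"
  shows "T \<in> bop I J"
proof -
  have "\<forall>x\<in>l2v I. vnorm (T x) \<le> sqrt (max C 0) * vnorm x"
  proof
    fix x assume x: "x \<in> l2v I"
    have "C * vn2 x \<le> max C 0 * vn2 x" by (rule mult_right_mono) (auto simp: vn2_nonneg)
    hence "vn2 (T x) \<le> max C 0 * vn2 x" using assms(3)[OF x] by linarith
    hence "sqrt (vn2 (T x)) \<le> sqrt (max C 0 * vn2 x)" by simp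
    thus "vnorm (T x) \<le> sqrt (max C 0) * vnorm x" by (simp add: vnorm_vn2 real_sqrt_mult)
  qed
  thus ?thesis unfolding bop_def using assms(1,2,4) by blast
qed

lemma bop_comp: assumes A: "A \<in> bop I J" and B: "B \<in> bop J K" shows "B \<circ> A \<in> bop I K"
proof -
  obtain Ca where Ca: "Ca \<ge> 0" "\<forall>x\<in>l2v I. vn2 (A x) \<le> Ca * vn2 x" using bop_bound2[OF A] by blast
  obtain Cb where Cb: "Cb \<ge> 0" "\<forall>x\<in>l2v J. vn2 (B x) \<le> Cb * vn2 x" using bop_bound2[OF B] by blast
  show ?thesis
  proof (rule bopI[where C = "Cb * Ca"])
    fix x assume x: "x \<in> l2v I"
    show "(B \<circ> A) x \<in> l2v K" using x by (simp add: bop_in[OF B] bop_in[OF A])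
    have "vn2 (B (A x)) \<le> Cb * vn2 (A x)" using Cb bop_in[OF A x] by blast
    also have "\<dots> \<le> Cb * (Ca * vn2 x)" using Ca(2) x Cb(1) by (simp add: mult_left_mono)
    finally show "vn2 ((B \<circ> A) x) \<le> Cb * Ca * vn2 x" by (simp add: mult.assoc)
  next
    fix x y a b assume x: "x \<in> l2v I" and y: "y \<in> l2v I"
    show "(B \<circ> A) (\<lambda>i. a * x i + b * y i) = (\<lambda>j. a * (B \<circ> A) x j + b * (B \<circ> A) y j)"
      using bop_lin[OF A x y] bop_lin[OF B bop_in[OF A x] bop_in[OF A y]] by simp
  next
    fix x assume "x \<notin> l2v I" thus "(B \<circ> A) x = (\<lambda>_. 0)" by (simp add: bop_out[OF A] bop_zero[OF B])
  qed
qed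

lemma oid_in: "x \<in> l2v I \<Longrightarrow> oid I x = x" by (simp add: oid_def)
lemma oid_bop: "oid I \<in> bop I I"
proof (rule bopI[where C=1])
  fix x y a b assume x: "x \<in> l2v I" and y: "y \<in> l2v I"
  show "oid I (\<lambda>i. a * x i + b * y i) = (\<lambda>j. a * oid I x j + b * oid I y j)"
    using lin_l2v[OF x y, of a b] x y by (simp add: oid_in)
qed (simp_all add: oid_def)

lemma bop_oid_right: "T \<in> bop I J \<Longrightarrow> T \<circ> oid I = T"
proof (rule ext)
  fix x assume T: "T \<in> bop I J"
  show "(T \<circ> oid I) x = T x"
    by (cases "x \<in> l2v I") (simp_all add: oid_def bop_out[OF T] bop_zero[OF T])
qed
lemma bop_oid_left: "T \<in> bop I J \<Longrightarrow> oid J \<circ> T = T"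
proof (rule ext)
  fix x assume T: "T \<in> bop I J"
  show "(oid J \<circ> T) x = T x"
    by (cases "x \<in> l2v I") (simp_all add: oid_in bop_in[OF T] bop_out[OF T] del: zero_l2v, simp add: oid_def)
qed

lemma binv_props: assumes "binvertible I J s"
  shows "binv I J s \<in> bop J I" "binv I J s \<circ> s = oid I" "s \<circ> binv I J s = oid J"
proof -
  have "\<exists>t. t \<in> bop J I \<and> t \<circ> s = oid I \<and> s \<circ> t = oid J" using assms unfolding binvertible_def by blast
  from someI_ex[OF this] show "binv I J s \<in> bop J I" "binv I J s \<circ> s = oid I" "s \<circ> binv I J s = oid J"
    unfolding binv_def by blast+
qed

lemma binv_unique: assumes s: "s \<in> bop I J" and t: "t \<in> bop J I" and ts: "t \<circ> s = oid I" and st: "s \<circ> t = oid J"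
  shows "binvertible I J s" "binv I J s = t"
proof -
  show bi: "binvertible I J s" unfolding binvertible_def using assms by blast
  note b = binv_props[OF bi]
  have "binv I J s = binv I J s \<circ> (s \<circ> t)" using st bop_oid_right[OF b(1)] by simp
  also have "\<dots> = (binv I J s \<circ> s) \<circ> t" by (simp add: o_assoc)
  also have "\<dots> = t" using b(2) bop_oid_left[OF t] by simp
  finally show "binv I J s = t" .
qed

lemma binv_left: "binvertible I J s \<Longrightarrow> x \<in> l2v I \<Longrightarrow> binv I J s (s x) = x"
  using binv_props(2)[of I J s] by (metis comp_apply oid_in)
lemma binv_right: "binvertible I J s \<Longrightarrow> y \<in> l2v J \<Longrightarrow> s (binv I J s y) = y"
  using binv_props(3)[of I J s] by (metis comp_apply oid_in)
lemma binvertible_bop: "binvertible I J s \<Longrightarrow> s \<in> bop I J" by (simp add: binvertible_def)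


lemma vn2_vnorm: "vn2 x = (vnorm x)^2" by (simp add: vnorm_vn2 vn2_nonneg)

lemma diff_l2v: "x \<in> l2v I \<Longrightarrow> y \<in> l2v I \<Longrightarrow> (\<lambda>i. x i - y i) \<in> l2v I"
  using lin_l2v[of x I y 1 "-1"] by simp
lemma add_l2v: "x \<in> l2v I \<Longrightarrow> y \<in> l2v I \<Longrightarrow> (\<lambda>i. x i + y i) \<in> l2v I"
  using lin_l2v[of x I y 1 1] by simp

lemma unitary_binvertible: assumes U: "unitary_op I J u" shows "binvertible I J u"
proof -
  have ub: "u \<in> bop I J" and iso: "\<And>x. x\<in>l2v I \<Longrightarrow> vnorm (u x) = vnorm x"
    and su: "u ` l2v I = l2v J" using U unfolding unitary_op_def by auto
  have inj: "inj_on u (l2v I)"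
  proof (rule inj_onI)
    fix x y assume x: "x \<in> l2v I" and y: "y \<in> l2v I" and e: "u x = u y"
    have z: "(\<lambda>i. x i - y i) \<in> l2v I" using diff_l2v[OF x y] .
    have "u (\<lambda>i. x i - y i) = (\<lambda>_. 0)" using bop_diff[OF ub x y] e by simp
    hence "vnorm (\<lambda>i. x i - y i) = 0" using iso[OF z] by (simp add: vnorm_vn2)
    hence "vn2 (\<lambda>i. x i - y i) = 0" by (simp add: vn2_vnorm)
    from vn2_zero_iff[OF z this] show "x = y" by (rule_tac ext) (drule_tac x=xa in fun_cong, simp)
  qed
  define t where "t = (\<lambda>y. if y \<in> l2v J then inv_into (l2v I) u y else (\<lambda>_. 0))"
  have tin: "t y \<in> l2v I" and ut: "u (t y) = y" if "y \<in> l2v J" for y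
    using that su by (auto simp: t_def inv_into_into f_inv_into_f)
  have tu: "t (u x) = x" if "x \<in> l2v I" for x
    using that bop_in[OF ub that] inj by (simp add: t_def)
  have u0: "u (\<lambda>_. 0) = (\<lambda>_. 0)" by (rule bop_zero[OF ub])
  have tb: "t \<in> bop J I"
  proof (rule bopI[where C=1])
    fix x y a b assume x: "x \<in> l2v J" and y: "y \<in> l2v J"
    have "u (\<lambda>i. a * t x i + b * t y i) = (\<lambda>j. a * x j + b * y j)"
      using bop_lin[OF ub tin[OF x] tin[OF y]] ut[OF x] ut[OF y] by simp
    hence "t (\<lambda>j. a * x j + b * y j) = t (u (\<lambda>i. a * t x i + b * t y i))" by simp
    also have "\<dots> = (\<lambda>i. a * t x i + b * t y i)" by (rule tu[OF lin_l2v[OF tin[OF x] tin[OF y]]])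
    finally show "t (\<lambda>i. a * x i + b * y i) = (\<lambda>j. a * t x j + b * t y j)" .
  next
    fix x assume x: "x \<in> l2v J"
    show "vn2 (t x) \<le> 1 * vn2 x" using iso[OF tin[OF x]] ut[OF x] by (simp add: vn2_vnorm)
  qed (use tin in \<open>auto simp: t_def\<close>)
  have "t \<circ> u = oid I"
  proof (rule ext)
    fix x show "(t \<circ> u) x = oid I x"
    proof (cases "x \<in> l2v I")
      case True thus ?thesis by (simp add: tu oid_in)
    next
      case False
      hence "u x = (\<lambda>_. 0)" by (rule bop_out[OF ub])
      thus ?thesis using False tu[OF zero_l2v] u0 by (simp add: oid_def)
    qed
  qed
  moreover have "u \<circ> t = oid J"
  proof (rule ext)
    fix y show "(u \<circ> t) y = oid J y"
      by (cases "y \<in> l2v J") (simp_all add: ut oid_in, simp add: t_def oid_def u0)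
  qed
  ultimately show ?thesis using binv_unique(1)[OF ub tb] by blast
qed


definition injb :: "nat \<Rightarrow> vec \<Rightarrow> (nat \<times> nat \<Rightarrow> complex)" where
  "injb n v = (if v \<in> l2v UNIV then (\<lambda>(m,j). if m = n then v j else 0) else (\<lambda>_. 0))"
definition prjb :: "enat \<Rightarrow> nat \<Rightarrow> (nat \<times> nat \<Rightarrow> complex) \<Rightarrow> vec" where
  "prjb l n w = (if w \<in> l2v (Hl l) then (\<lambda>j. w (n,j)) else (\<lambda>_. 0))"

lemma Hl_iff[simp]: "(n, j) \<in> Hl l \<longleftrightarrow> enat n < l" by (simp add: Hl_def)

lemma blk_summ:
  assumes v: "v \<in> l2v UNIV"
  shows "(\<lambda>p. (cmod ((\<lambda>(m,j). if m = n then v j else 0) p))^2) summable_on UNIV" (is "?g summable_on _")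
    and "vn2 (\<lambda>(m,j). if m = n then v j else 0) = vn2 v"
proof -
  have neut: "\<And>p. p \<in> UNIV - range (Pair n) \<Longrightarrow> ?g p = 0" by auto
  have c: "?g \<circ> Pair n = (\<lambda>j. (cmod (v j))^2)" by (rule ext) simp
  have "?g summable_on UNIV \<longleftrightarrow> ?g summable_on range (Pair n)"
    by (rule summable_on_cong_neutral) (use neut in auto)
  also have "\<dots> \<longleftrightarrow> (?g \<circ> Pair n) summable_on UNIV" by (rule summable_on_reindex) (simp add: inj_on_def)
  finally show "?g summable_on UNIV" using c l2v_summ[OF v] by simp
  have "infsum ?g UNIV = infsum ?g (range (Pair n))"
    by (rule infsum_cong_neutral) (use neut in auto)
  also have "\<dots> = infsum (?g \<circ> Pair n) UNIV" by (rule infsum_reindex) (simp add: inj_on_def)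
  finally show "vn2 (\<lambda>(m,j). if m = n then v j else 0) = vn2 v" using c by (simp add: vn2_def)
qed

lemma injb_l2v: assumes "enat n < l" "v \<in> l2v UNIV" shows "injb n v \<in> l2v (Hl l)"
  unfolding l2v_iff injb_def using assms blk_summ(1)[OF assms(2), of n] by auto

lemma injb_vn2: assumes "v \<in> l2v UNIV" shows "vn2 (injb n v) = vn2 v"
  using blk_summ(2)[OF assms] assms by (simp add: injb_def)

lemma injb_out: "v \<notin> l2v UNIV \<Longrightarrow> injb n v = (\<lambda>_. 0)" by (simp add: injb_def)

lemma injb_bop: assumes "enat n < l" shows "injb n \<in> bop UNIV (Hl l)"
proof (rule bopI[where C=1])
  fix x y :: vec and a b :: complex assume x: "x \<in> l2v UNIV" and y: "y \<in> l2v UNIV"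
  show "injb n (\<lambda>i. a * x i + b * y i) = (\<lambda>j. a * injb n x j + b * injb n y j)"
    using lin_l2v[OF x y, of a b] x y by (auto simp: injb_def)
qed (auto simp: injb_l2v[OF assms] injb_vn2 injb_out)

lemma prj_summ: assumes w: "w \<in> l2v (Hl l)"
  shows "(\<lambda>j. w (n,j)) \<in> l2v UNIV" "vn2 (\<lambda>j. w (n,j)) \<le> vn2 w"
proof -
  let ?g = "\<lambda>p. (cmod (w p))^2"
  have s: "?g summable_on UNIV" by (rule l2v_summ[OF w])
  have "?g summable_on range (Pair n)" by (rule summable_on_subset[OF s]) simp
  hence "(?g \<circ> Pair n) summable_on UNIV" by (subst (asm) summable_on_reindex) (simp_all add: inj_on_def)
  thus "(\<lambda>j. w (n,j)) \<in> l2v UNIV" unfolding l2v_iff by (simp add: o_def)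
  have "infsum ?g (range (Pair n)) \<le> infsum ?g UNIV"
    by (rule infsum_mono2) (auto intro: s \<open>?g summable_on range (Pair n)\<close>)
  moreover have "infsum ?g (range (Pair n)) = infsum (?g \<circ> Pair n) UNIV" by (rule infsum_reindex) (simp add: inj_on_def)
  ultimately show "vn2 (\<lambda>j. w (n,j)) \<le> vn2 w" by (simp add: vn2_def o_def)
qed

lemma prjb_bop: "prjb l n \<in> bop (Hl l) UNIV"
proof (rule bopI[where C=1])
  fix x y :: "nat \<times> nat \<Rightarrow> complex" and a b :: complex assume x: "x \<in> l2v (Hl l)" and y: "y \<in> l2v (Hl l)"
  show "prjb l n (\<lambda>i. a * x i + b * y i) = (\<lambda>j. a * prjb l n x j + b * prjb l n y j)"
    using lin_l2v[OF x y, of a b] x y by (auto simp: prjb_def)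
qed (auto simp: prjb_def prj_summ)

lemma prjb_in: "w \<in> l2v (Hl l) \<Longrightarrow> prjb l n w = (\<lambda>j. w (n,j))" by (simp add: prjb_def)

lemma prjb_injb: assumes "enat n < l" "v \<in> l2v UNIV" shows "prjb l n (injb n v) = v"
  using injb_l2v[OF assms] assms(2) by (simp add: prjb_def injb_def)

definition pr2 :: "vec \<Rightarrow> vec \<Rightarrow> (nat \<times> nat \<Rightarrow> complex)" where
  "pr2 a b = (\<lambda>(n,j). if n = 0 then a j else if n = 1 then b j else 0)"

lemma enat_lt2: "enat n < 2 \<longleftrightarrow> n < 2"
  by (metis enat_ord_simps(2) numeral_eq_enat)

lemma pr2_l2v: assumes "a \<in> l2v UNIV" "b \<in> l2v UNIV" shows "pr2 a b \<in> l2v (Hl 2)"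
proof -
  have "pr2 a b = (\<lambda>p. injb 0 a p + injb 1 b p)"
    using assms by (auto simp: pr2_def injb_def)
  moreover have "(\<lambda>p. injb 0 a p + injb 1 b p) \<in> l2v (Hl 2)"
    by (rule add_l2v; rule injb_l2v) (use assms in \<open>simp_all add: enat_lt2\<close>)
  ultimately show ?thesis by simp
qed

lemma pr2_decomp: assumes "w \<in> l2v (Hl 2)" shows "w = pr2 (\<lambda>j. w (0,j)) (\<lambda>j. w (1,j))"
proof (rule ext, clarify)
  fix n j
  show "w (n,j) = pr2 (\<lambda>j. w (0,j)) (\<lambda>j. w (1,j)) (n,j)"
  proof (cases "n < 2")
    case True thus ?thesis by (cases n) (auto simp: pr2_def)
  next
    case False
    hence "(n,j) \<notin> Hl 2" by (simp add: enat_lt2)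
    thus ?thesis using False l2v_out[OF assms] by (simp add: pr2_def)
  qed
qed

lemma pr2_eq_iff: "pr2 a b = pr2 c d \<longleftrightarrow> a = c \<and> b = d"
proof
  assume "pr2 a b = pr2 c d"
  hence "\<And>j. pr2 a b (0,j) = pr2 c d (0,j)" "\<And>j. pr2 a b (1,j) = pr2 c d (1,j)" by simp_all
  thus "a = c \<and> b = d" by (auto simp: pr2_def)
qed simp

lemma dsum_coord: "w \<in> l2v (Hl l) \<Longrightarrow> dsum l xs w (n,j) = (if enat n < l then xs n (\<lambda>i. w (n,i)) j else 0)"
  by (simp add: dsum_def)

lemma dsum2_pr2: assumes "a \<in> l2v UNIV" "b \<in> l2v UNIV"
  shows "dsum 2 xs (pr2 a b) = pr2 (xs 0 a) (xs 1 b)"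
proof (rule ext, clarify)
  fix n j
  show "dsum 2 xs (pr2 a b) (n,j) = pr2 (xs 0 a) (xs 1 b) (n,j)"
    using pr2_l2v[OF assms] by (cases n; cases "n - 1") (auto simp: dsum_coord enat_lt2 pr2_def)
qed


lemma pr2_sum: "a \<in> l2v UNIV \<Longrightarrow> b \<in> l2v UNIV \<Longrightarrow> pr2 a b = (\<lambda>p. injb 0 a p + injb 1 b p)"
  by (auto simp: pr2_def injb_def)

lemma pr2_vn2: assumes "a \<in> l2v UNIV" "b \<in> l2v UNIV" shows "vn2 (pr2 a b) \<le> 2 * vn2 a + 2 * vn2 b"
proof -
  have i: "injb 0 a \<in> l2v (Hl 2)" "injb 1 b \<in> l2v (Hl 2)"
    using assms by (simp_all add: injb_l2v enat_lt2)
  have "vn2 (pr2 a b) = vn2 (\<lambda>p. 1 * injb 0 a p + 1 * injb 1 b p)" using pr2_sum[OF assms] by simp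
  also have "\<dots> \<le> 2 * (cmod 1)^2 * vn2 (injb 0 a) + 2 * (cmod 1)^2 * vn2 (injb 1 b)"
    by (rule lin_summ(2)[OF i])
  finally show ?thesis using assms by (simp add: injb_vn2)
qed

lemma pr2_zero: "pr2 (\<lambda>_. 0) (\<lambda>_. 0) = (\<lambda>_. 0)" by (auto simp: pr2_def)

lemma pr2_lin: "(\<lambda>p. \<alpha> * pr2 a b p + \<beta> * pr2 c d p) = pr2 (\<lambda>j. \<alpha> * a j + \<beta> * c j) (\<lambda>j. \<alpha> * b j + \<beta> * d j)"
  by (auto simp: pr2_def)

lemma pr2_app[simp]: "pr2 a b (0, j) = a j" "pr2 a b (Suc 0, j) = b j" by (simp_all add: pr2_def)

lemma pr2_comp0[simp]: "(\<lambda>j. pr2 a b (0, j)) = a" and pr2_comp1[simp]: "(\<lambda>j. pr2 a b (Suc 0, j)) = b"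
  by (simp_all add: pr2_def)

definition Sop :: "hop \<Rightarrow> complex \<Rightarrow> (nat \<times> nat \<Rightarrow> complex) \<Rightarrow> (nat \<times> nat \<Rightarrow> complex)" where
  "Sop T c w = (if w \<in> l2v (Hl 2) then pr2 (\<lambda>j. w (0,j) + c * T (\<lambda>j. w (1,j)) j) (\<lambda>j. w (1,j)) else (\<lambda>_. 0))"

lemma Sop_pr2: assumes "a \<in> l2v UNIV" "b \<in> l2v UNIV"
  shows "Sop T c (pr2 a b) = pr2 (\<lambda>j. a j + c * T b j) b"
  using pr2_l2v[OF assms] by (simp add: Sop_def)

lemma comp_l2v: "w \<in> l2v (Hl 2) \<Longrightarrow> (\<lambda>j. w (n,j)) \<in> l2v UNIV"
  by (rule prj_summ(1))

lemma Sop_bop: assumes T: "T \<in> bop UNIV UNIV" shows "Sop T c \<in> bop (Hl 2) (Hl 2)"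
proof -
  obtain CT where CT: "CT \<ge> 0" "\<forall>x\<in>l2v UNIV. vn2 (T x) \<le> CT * vn2 x" using bop_bound2[OF T] by blast
  have lc: "(\<lambda>j. a j + c * T b j) \<in> l2v UNIV" if "a \<in> l2v UNIV" "b \<in> l2v UNIV" for a b
    using lin_l2v[OF that(1) bop_in[OF T that(2)], of 1 c] by simp
  show ?thesis
  proof (rule bopI[where C = "2 * (2 + 2 * (cmod c)^2 * CT) + 2"])
    fix w :: "nat \<times> nat \<Rightarrow> complex" assume w: "w \<in> l2v (Hl 2)"
    have a: "(\<lambda>j. w (0,j)) \<in> l2v UNIV" and b: "(\<lambda>j. w (1,j)) \<in> l2v UNIV" using w by (simp_all add: comp_l2v)
    show "Sop T c w \<in> l2v (Hl 2)" using w pr2_l2v[OF lc[OF a b] b] by (simp add: Sop_def)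
    have "vn2 (Sop T c w) \<le> 2 * vn2 (\<lambda>j. w (0,j) + c * T (\<lambda>j. w (1,j)) j) + 2 * vn2 (\<lambda>j. w (1,j))"
      using w pr2_vn2[OF lc[OF a b] b] by (simp add: Sop_def)
    also have "vn2 (\<lambda>j. w (0,j) + c * T (\<lambda>j. w (1,j)) j) \<le> 2 * vn2 w + 2 * (cmod c)^2 * CT * vn2 w"
    proof -
      have e1: "vn2 (\<lambda>j. 1 * w (0,j) + c * T (\<lambda>j. w (1,j)) j) \<le> 2 * (cmod 1)^2 * vn2 (\<lambda>j. w (0,j)) + 2 * (cmod c)^2 * vn2 (T (\<lambda>j. w (1,j)))"
        by (rule lin_summ(2)[OF a bop_in[OF T b]])
      have e2: "vn2 (\<lambda>j. w (0,j)) \<le> vn2 w" "vn2 (\<lambda>j. w (1,j)) \<le> vn2 w" using prj_summ(2)[OF w] by auto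
      have e3: "vn2 (T (\<lambda>j. w (1,j))) \<le> CT * vn2 (\<lambda>j. w (1,j))" using CT(2) b by blast
      have e4: "CT * vn2 (\<lambda>j. w (1,j)) \<le> CT * vn2 w" using CT(1) e2(2) by (simp add: mult_left_mono)
      have e5: "2 * (cmod c)^2 * vn2 (T (\<lambda>j. w (1,j))) \<le> 2 * (cmod c)^2 * (CT * vn2 w)"
        by (rule mult_left_mono) (use e3 e4 in auto)
      have "vn2 (\<lambda>j. w (0,j) + c * T (\<lambda>j. w (1,j)) j) \<le> 2 * vn2 (\<lambda>j. w (0,j)) + 2 * (cmod c)^2 * vn2 (T (\<lambda>j. w (1,j)))"
        using e1 by simp
      thus ?thesis using e2 e5 by (simp add: mult.assoc)
    qed
    also have "vn2 (\<lambda>j. w (1,j)) \<le> vn2 w" using prj_summ(2)[OF w] by auto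
    finally show "vn2 (Sop T c w) \<le> (2 * (2 + 2 * (cmod c)^2 * CT) + 2) * vn2 w"
      by (simp add: algebra_simps)
  next
    fix w z :: "nat \<times> nat \<Rightarrow> complex" and \<alpha> \<beta> :: complex
    assume w: "w \<in> l2v (Hl 2)" and z: "z \<in> l2v (Hl 2)"
    have w': "w = pr2 (\<lambda>j. w (0,j)) (\<lambda>j. w (1,j))" and z': "z = pr2 (\<lambda>j. z (0,j)) (\<lambda>j. z (1,j))"
      using pr2_decomp w z by blast+
    obtain a b where ab: "w = pr2 a b" "a \<in> l2v UNIV" "b \<in> l2v UNIV" using w' w comp_l2v by blast
    obtain a' b' where ab': "z = pr2 a' b'" "a' \<in> l2v UNIV" "b' \<in> l2v UNIV" using z' z comp_l2v by blast
    have l1: "(\<lambda>j. \<alpha> * a j + \<beta> * a' j) \<in> l2v UNIV" "(\<lambda>j. \<alpha> * b j + \<beta> * b' j) \<in> l2v UNIV"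
      using ab ab' by (simp_all add: lin_l2v)
    have Tl: "T (\<lambda>j. \<alpha> * b j + \<beta> * b' j) = (\<lambda>j. \<alpha> * T b j + \<beta> * T b' j)" by (rule bop_lin[OF T ab(3) ab'(3)])
    show "Sop T c (\<lambda>i. \<alpha> * w i + \<beta> * z i) = (\<lambda>j. \<alpha> * Sop T c w j + \<beta> * Sop T c z j)"
      unfolding ab(1) ab'(1) pr2_lin Sop_pr2[OF l1] Sop_pr2[OF ab(2,3)] Sop_pr2[OF ab'(2,3)] Tl
      by (simp add: pr2_def algebra_simps)
  next
    fix w :: "nat \<times> nat \<Rightarrow> complex" assume "w \<notin> l2v (Hl 2)" thus "Sop T c w = (\<lambda>_. 0)" by (simp add: Sop_def)
  qed
qed


lemma Sop_zero: assumes T: "T \<in> bop UNIV UNIV" shows "Sop T c (\<lambda>_. 0) = (\<lambda>_. 0)"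
  using Sop_pr2[OF zero_l2v zero_l2v, of T c] bop_zero[OF T] by (simp add: pr2_zero)

lemma l2v_pr2E: assumes "w \<in> l2v (Hl 2)" obtains a b where "w = pr2 a b" "a \<in> l2v UNIV" "b \<in> l2v UNIV"
  using pr2_decomp[OF assms] comp_l2v[OF assms] by blast

lemma Sop_inv: assumes T: "T \<in> bop UNIV UNIV" shows "Sop T c \<circ> Sop T (-c) = oid (Hl 2)"
proof (rule ext)
  fix w show "(Sop T c \<circ> Sop T (-c)) w = oid (Hl 2) w"
  proof (cases "w \<in> l2v (Hl 2)")
    case True
    then obtain a b where ab: "w = pr2 a b" "a \<in> l2v UNIV" "b \<in> l2v UNIV" by (rule l2v_pr2E)
    have lc: "(\<lambda>j. a j - c * T b j) \<in> l2v UNIV"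
      using lin_l2v[OF ab(2) bop_in[OF T ab(3)], of 1 "-c"] by simp
    have "Sop T (-c) w = pr2 (\<lambda>j. a j - c * T b j) b" using ab Sop_pr2[OF ab(2,3), of T "-c"] by simp
    moreover have "Sop T c (pr2 (\<lambda>j. a j - c * T b j) b) = pr2 a b" using Sop_pr2[OF lc ab(3), of T c] by simp
    ultimately show ?thesis using True ab by (simp add: oid_in)
  next
    case False
    hence "Sop T (-c) w = (\<lambda>_. 0)" by (simp add: Sop_def)
    thus ?thesis using False Sop_zero[OF T, of c] by (simp add: oid_def)
  qed
qed

lemma dsum2_zero: assumes "xs 0 (\<lambda>_. 0) = (\<lambda>_. 0)" "xs 1 (\<lambda>_. 0) = (\<lambda>_. 0)"
  shows "dsum 2 xs (\<lambda>_. 0) = (\<lambda>_. 0)"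
  using dsum2_pr2[OF zero_l2v zero_l2v, of xs] assms by (simp add: pr2_zero)

lemma Sop_conj:
  assumes T: "T \<in> bop UNIV UNIV" and A: "A \<in> bop UNIV UNIV" and B: "B \<in> bop UNIV UNIV"
    and inter: "\<And>v. v \<in> l2v UNIV \<Longrightarrow> A (T v) = T (B v)"
  shows "Sop T (-1) \<circ> dsum 2 (\<lambda>n. if n = 0 then A else B) \<circ> Sop T 1 = dsum 2 (\<lambda>n. if n = 0 then A else B)"
proof (rule ext)
  fix w
  let ?D = "dsum 2 (\<lambda>n. if n = 0 then A else B)"
  have D0: "?D (\<lambda>_. 0) = (\<lambda>_. 0)" by (rule dsum2_zero) (simp_all add: bop_zero[OF A] bop_zero[OF B])
  show "(Sop T (-1) \<circ> ?D \<circ> Sop T 1) w = ?D w"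
  proof (cases "w \<in> l2v (Hl 2)")
    case True
    then obtain a b where ab: "w = pr2 a b" "a \<in> l2v UNIV" "b \<in> l2v UNIV" by (rule l2v_pr2E)
    have Tb: "T b \<in> l2v UNIV" by (rule bop_in[OF T ab(3)])
    have lc: "(\<lambda>j. a j + 1 * T b j) \<in> l2v UNIV" using lin_l2v[OF ab(2) Tb, of 1 1] by simp
    have Ab: "A (\<lambda>j. a j + 1 * T b j) = (\<lambda>j. A a j + T (B b) j)"
      using bop_add[OF A ab(2) Tb] inter[OF ab(3)] by simp
    have l3: "A a \<in> l2v UNIV" "B b \<in> l2v UNIV" "T (B b) \<in> l2v UNIV"
      using bop_in[OF A ab(2)] bop_in[OF B ab(3)] bop_in[OF T bop_in[OF B ab(3)]] by auto
    have l4: "(\<lambda>j. A a j + T (B b) j) \<in> l2v UNIV" using add_l2v[OF l3(1) l3(3)] .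
    have "(Sop T (-1) \<circ> ?D \<circ> Sop T 1) w = Sop T (-1) (?D (pr2 (\<lambda>j. a j + 1 * T b j) b))"
      using ab by (simp add: Sop_pr2)
    also have "\<dots> = Sop T (-1) (pr2 (\<lambda>j. A a j + T (B b) j) (B b))"
      using dsum2_pr2[OF lc ab(3), of "\<lambda>n. if n = 0 then A else B"] Ab by simp
    also have "\<dots> = pr2 (A a) (B b)" using Sop_pr2[OF l4 l3(2), of T "-1"] by simp
    also have "\<dots> = ?D w" using ab dsum2_pr2[OF ab(2,3), of "\<lambda>n. if n = 0 then A else B"] by simp
    finally show ?thesis .
  next
    case False
    hence "Sop T 1 w = (\<lambda>_. 0)" "?D w = (\<lambda>_. 0)" by (simp_all add: Sop_def dsum_def)
    thus ?thesis using D0 Sop_zero[OF T] by simp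
  qed
qed


lemma bop_in': assumes "T \<in> bop I J" shows "T x \<in> l2v J"
  by (cases "x \<in> l2v I") (simp_all add: bop_in[OF assms] bop_out[OF assms])

lemma ex_BHt: "exhausting_seq Om Omk \<Longrightarrow> Om \<subseteq> BHt"
  unfolding exhausting_seq_def by (elim conjE) assumption
lemma ex_sub: assumes "exhausting_seq Om Omk" shows "Omk k \<subseteq> Om"
proof -
  have h: "\<forall>k. Omk k \<subseteq> Om" using assms unfolding exhausting_seq_def by (elim conjE) assumption
  thus ?thesis by (rule spec)
qed
lemma ex_int: assumes "exhausting_seq Om Omk" shows "Omk k \<subseteq> norm_interior (Omk (Suc k))"
proof -
  have h: "\<forall>k. Omk k \<subseteq> norm_interior (Omk (Suc k))" using assms unfolding exhausting_seq_def by (elim conjE) assumption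
  thus ?thesis by (rule spec)
qed
lemma ex_Un: "exhausting_seq Om Omk \<Longrightarrow> Om = (\<Union>k. Omk k)"
  unfolding exhausting_seq_def by (elim conjE) assumption
lemma ex_ds: assumes "exhausting_seq Om Omk" "l \<noteq> 0" "\<And>n. enat n < l \<Longrightarrow> xs n \<in> Omk k"
  shows "\<exists>u. unitary_op UNIV (Hl l) u \<and> tconj l u (tdsum l xs) \<in> Omk k"
proof -
  have h: "\<forall>k. \<forall>l xs. l \<noteq> 0 \<longrightarrow> (\<forall>n. enat n < l \<longrightarrow> xs n \<in> Omk k) \<longrightarrow>
        (\<exists>u. unitary_op UNIV (Hl l) u \<and> tconj l u (tdsum l xs) \<in> Omk k)"
    using assms(1) unfolding exhausting_seq_def by (elim conjE) assumption
  have "l \<noteq> 0 \<longrightarrow> (\<forall>n. enat n < l \<longrightarrow> xs n \<in> Omk k) \<longrightarrow>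
        (\<exists>u. unitary_op UNIV (Hl l) u \<and> tconj l u (tdsum l xs) \<in> Omk k)"
    by (rule spec[of _ xs, OF spec[of _ l, OF spec[of _ k, OF h]]])
  moreover have "\<forall>n. enat n < l \<longrightarrow> xs n \<in> Omk k" using assms(3) by simp
  ultimately show ?thesis using assms(2) by simp
qed

lemma ex_mono: assumes ex: "exhausting_seq Om Omk" and "k \<le> k'" shows "Omk k \<subseteq> Omk k'"
proof -
  have "Omk k \<subseteq> Omk (Suc k)" for k using ex_int[OF ex, of k] unfolding norm_interior_def by blast
  thus ?thesis using assms(2) by (rule lift_Suc_mono_le)
qed

lemma ex_common: assumes ex: "exhausting_seq Om Omk" and "x \<in> Om" "y \<in> Om" shows "\<exists>k. x \<in> Omk k \<and> y \<in> Omk k"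
proof -
  obtain k1 k2 where "x \<in> Omk k1" "y \<in> Omk k2" using assms ex_Un[OF ex] by blast
  thus ?thesis using ex_mono[OF ex, of k1 "max k1 k2"] ex_mono[OF ex, of k2 "max k1 k2"] by auto
qed

lemma Om_bop: "exhausting_seq Om Omk \<Longrightarrow> x \<in> Om \<Longrightarrow> x i \<in> bop UNIV UNIV"
  using ex_BHt[of Om Omk] by (auto simp: BHt_def BH_def)

lemma nc_bop: assumes "nc_function Om f" "x \<in> Om" shows "f x i \<in> bop UNIV UNIV"
proof -
  have h: "\<forall>x\<in>Om. f x \<in> BHt" using assms(1) unfolding nc_function_def by (elim conjE) assumption
  thus ?thesis using assms(2) by (simp add: BHt_def BH_def)
qed

lemma nc_eq: assumes "nc_function Om f" "x \<in> Om" "y \<in> Om" "binvertible UNIV (Hl 2) s"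
        "tconj 2 s (tdsum 2 (\<lambda>n. if n = 0 then x else y)) \<in> Om"
  shows "f (tconj 2 s (tdsum 2 (\<lambda>n. if n = 0 then x else y)))
          = tconj 2 s (tdsum 2 (\<lambda>n. if n = 0 then f x else f y))"
proof -
  have h: "\<forall>x\<in>Om. \<forall>y\<in>Om. \<forall>s. binvertible UNIV (Hl 2) s \<longrightarrow>
        tconj 2 s (tdsum 2 (\<lambda>n. if n = 0 then x else y)) \<in> Om \<longrightarrow>
        f (tconj 2 s (tdsum 2 (\<lambda>n. if n = 0 then x else y)))
          = tconj 2 s (tdsum 2 (\<lambda>n. if n = 0 then f x else f y))"
    using assms(1) unfolding nc_function_def by (elim conjE) assumption
  show ?thesis by (rule h[rule_format, OF assms(2-5)])
qed

lemma tdsum_if: "tdsum l (\<lambda>n. if n = 0 then x else y) i = dsum l (\<lambda>n. if n = 0 then x i else y i)"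
  unfolding tdsum_def by (rule arg_cong[where f="dsum l"], rule ext) simp

lemma intertwine:
  fixes Om :: "('d::finite) tup set" and f :: "'d tup \<Rightarrow> ('r::finite) tup" and j :: 'r
  assumes ex: "exhausting_seq Om Omk" and nc: "nc_function Om f"
    and xO: "x \<in> Om" and yO: "y \<in> Om" and T: "T \<in> bop UNIV UNIV"
    and inter: "\<And>i v. v \<in> l2v UNIV \<Longrightarrow> x i (T v) = T (y i v)"
    and v: "v \<in> l2v UNIV"
  shows "f x j (T v) = T (f y j v)"
proof -
  obtain k where k: "x \<in> Omk k" "y \<in> Omk k" using ex_common[OF ex xO yO] by blast
  have "\<exists>u. unitary_op UNIV (Hl 2) u \<and> tconj 2 u (tdsum 2 (\<lambda>n. if n = 0 then x else y)) \<in> Omk k"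
    by (rule ex_ds[OF ex]) (use k in auto)
  then obtain u where uu: "unitary_op UNIV (Hl 2) u" and uZ: "tconj 2 u (tdsum 2 (\<lambda>n. if n = 0 then x else y)) \<in> Omk k"
    by blast
  have bu: "binvertible UNIV (Hl 2) u" by (rule unitary_binvertible[OF uu])
  define ui where "ui = binv UNIV (Hl 2) u"
  have ub: "u \<in> bop UNIV (Hl 2)" and uib: "ui \<in> bop (Hl 2) UNIV" and uiu: "ui \<circ> u = oid UNIV" and uui: "u \<circ> ui = oid (Hl 2)"
    using binv_props[OF bu] binvertible_bop[OF bu] unfolding ui_def by auto
  define s2 where "s2 = Sop T 1 \<circ> u"
  define t2 where "t2 = ui \<circ> Sop T (-1)"
  have S1: "Sop T 1 \<in> bop (Hl 2) (Hl 2)" and S2: "Sop T (-1) \<in> bop (Hl 2) (Hl 2)" by (simp_all add: Sop_bop[OF T])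
  have i1: "Sop T (-1) \<circ> Sop T 1 = oid (Hl 2)" using Sop_inv[OF T, of "-1"] by simp
  have i2: "Sop T 1 \<circ> Sop T (-1) = oid (Hl 2)" using Sop_inv[OF T, of 1] by simp
  have "t2 \<circ> s2 = ui \<circ> ((Sop T (-1) \<circ> Sop T 1) \<circ> u)" unfolding t2_def s2_def by (simp add: o_assoc)
  also have "\<dots> = oid UNIV" unfolding i1 bop_oid_left[OF ub] uiu ..
  finally have ts: "t2 \<circ> s2 = oid UNIV" .
  have "s2 \<circ> t2 = Sop T 1 \<circ> ((u \<circ> ui) \<circ> Sop T (-1))" unfolding t2_def s2_def by (simp add: o_assoc)
  also have "\<dots> = oid (Hl 2)" unfolding uui bop_oid_left[OF S2] i2 ..
  finally have st: "s2 \<circ> t2 = oid (Hl 2)" .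
  have s2b: "s2 \<in> bop UNIV (Hl 2)" unfolding s2_def by (rule bop_comp[OF ub S1])
  have t2b: "t2 \<in> bop (Hl 2) UNIV" unfolding t2_def by (rule bop_comp[OF S2 uib])
  have bs2: "binvertible UNIV (Hl 2) s2" and bis2: "binv UNIV (Hl 2) s2 = t2"
    using binv_unique[OF s2b t2b ts st] by auto
  have xb: "x i \<in> bop UNIV UNIV" "y i \<in> bop UNIV UNIV" for i using Om_bop[OF ex] xO yO by auto
  have fxb: "f x i \<in> bop UNIV UNIV" "f y i \<in> bop UNIV UNIV" for i using nc_bop[OF nc] xO yO by auto
  have "tconj 2 s2 (tdsum 2 (\<lambda>n. if n = 0 then x else y)) = tconj 2 u (tdsum 2 (\<lambda>n. if n = 0 then x else y))"
  proof (rule ext)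
    fix i
    have c: "Sop T (-1) \<circ> dsum 2 (\<lambda>n. if n = 0 then x i else y i) \<circ> Sop T 1 = dsum 2 (\<lambda>n. if n = 0 then x i else y i)"
      by (rule Sop_conj[OF T xb(1)[of i] xb(2)[of i] inter[of _ i]])
    have e1: "t2 \<circ> dsum 2 (\<lambda>n. if n = 0 then x i else y i) \<circ> s2 = ui \<circ> (Sop T (-1) \<circ> dsum 2 (\<lambda>n. if n = 0 then x i else y i) \<circ> Sop T 1) \<circ> u"
      by (rule ext) (simp add: t2_def s2_def)
    have e2: "tconj 2 s2 (tdsum 2 (\<lambda>n. if n = 0 then x else y)) i = t2 \<circ> dsum 2 (\<lambda>n. if n = 0 then x i else y i) \<circ> s2"
      by (simp only: tconj_def tdsum_if bis2)
    have e3: "tconj 2 u (tdsum 2 (\<lambda>n. if n = 0 then x else y)) i = ui \<circ> dsum 2 (\<lambda>n. if n = 0 then x i else y i) \<circ> u"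
      by (simp only: tconj_def tdsum_if ui_def)
    show "tconj 2 s2 (tdsum 2 (\<lambda>n. if n = 0 then x else y)) i = tconj 2 u (tdsum 2 (\<lambda>n. if n = 0 then x else y)) i"
      unfolding e2 e3 e1 c ..
  qed
  moreover have ZO: "tconj 2 u (tdsum 2 (\<lambda>n. if n = 0 then x else y)) \<in> Om" using uZ ex_sub[OF ex] by blast
  ultimately have "tconj 2 s2 (tdsum 2 (\<lambda>n. if n = 0 then f x else f y)) = tconj 2 u (tdsum 2 (\<lambda>n. if n = 0 then f x else f y))"
    using nc_eq[OF nc xO yO bs2] nc_eq[OF nc xO yO bu] by simp
  hence "tconj 2 s2 (tdsum 2 (\<lambda>n. if n = 0 then f x else f y)) j = tconj 2 u (tdsum 2 (\<lambda>n. if n = 0 then f x else f y)) j"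
    by simp
  hence eqj: "t2 \<circ> dsum 2 (\<lambda>n. if n = 0 then f x j else f y j) \<circ> s2 = ui \<circ> dsum 2 (\<lambda>n. if n = 0 then f x j else f y j) \<circ> u"
    by (simp only: tconj_def tdsum_if bis2 ui_def)
  define Df where "Df = dsum 2 (\<lambda>n. if n = 0 then f x j else f y j)"
  define w where "w = pr2 (\<lambda>_. 0) v"
  have w: "w \<in> l2v (Hl 2)" unfolding w_def by (rule pr2_l2v[OF zero_l2v v])
  define v' where "v' = ui w"
  have uv': "u v' = w" unfolding v'_def ui_def by (rule binv_right[OF bu w])
  have "ui (Sop T (-1) (Df (Sop T 1 w))) = ui (Df w)"
    using fun_cong[OF eqj, of v'] uv' unfolding t2_def s2_def Df_def by simp
  hence "u (ui (Sop T (-1) (Df (Sop T 1 w)))) = u (ui (Df w))" by simp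
  moreover have "Df w = pr2 (\<lambda>_. 0) (f y j v)"
    unfolding Df_def w_def using dsum2_pr2[OF zero_l2v v, of "\<lambda>n. if n = 0 then f x j else f y j"] bop_zero[OF fxb(1)] by simp
  moreover have "Df w \<in> l2v (Hl 2)" using calculation(2) pr2_l2v[OF zero_l2v bop_in[OF fxb(2) v]] by simp
  ultimately have e: "Sop T (-1) (Df (Sop T 1 w)) = pr2 (\<lambda>_. 0) (f y j v)"
    using binv_right[OF bu bop_in'[OF S2]] binv_right[OF bu] unfolding ui_def by metis
  have Tv: "T v \<in> l2v UNIV" by (rule bop_in[OF T v])
  have "Sop T 1 w = pr2 (T v) v" unfolding w_def using Sop_pr2[OF zero_l2v v, of T 1] by simp
  hence "Df (Sop T 1 w) = pr2 (f x j (T v)) (f y j v)"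
    unfolding Df_def using dsum2_pr2[OF Tv v, of "\<lambda>n. if n = 0 then f x j else f y j"] by simp
  hence "Sop T (-1) (Df (Sop T 1 w)) = pr2 (\<lambda>i. f x j (T v) i + -1 * T (f y j v) i) (f y j v)"
    using Sop_pr2[OF bop_in[OF fxb(1) Tv] bop_in[OF fxb(2) v], of T "-1"] by simp
  with e have "(\<lambda>i. f x j (T v) i + -1 * T (f y j v) i) = (\<lambda>_. 0)" by (simp add: pr2_eq_iff)
  thus ?thesis by (intro ext) (drule_tac x=xa in fun_cong, simp)
qed


lemma vn2_scale: assumes "x \<in> l2v I" shows "vn2 (\<lambda>i. c * x i) = (cmod c)^2 * vn2 x"
  unfolding vn2_def using l2v_summ[OF assms]
  by (simp add: norm_mult power_mult_distrib infsum_cmult_right)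

lemma scale_l2v: "x \<in> l2v I \<Longrightarrow> (\<lambda>i. c * x i) \<in> l2v I"
  using lin_l2v[of x I x c 0] by simp

lemma bop_scale: "T \<in> bop I J \<Longrightarrow> x \<in> l2v I \<Longrightarrow> T (\<lambda>i. c * x i) = (\<lambda>j. c * T x j)"
  using bop_lin[of T I J x x c 0] by simp

lemma opnorm_le:
  assumes T: "T \<in> bop I J" and K: "K \<ge> 0" and b: "\<And>u. u \<in> l2v I \<Longrightarrow> vnorm (T u) \<le> K * vnorm u"
  shows "opnorm I T \<le> K"
  unfolding opnorm_def
proof (rule cSup_least)
  show "(\<lambda>x. vnorm (T x)) ` {x \<in> l2v I. vnorm x \<le> 1} \<noteq> {}"
    using zero_l2v[of I] by (metis (mono_tags, lifting) empty_iff image_is_empty mem_Collect_eq vn2_zero vnorm_vn2 real_sqrt_zero zero_le_one)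
  fix r assume "r \<in> (\<lambda>x. vnorm (T x)) ` {x \<in> l2v I. vnorm x \<le> 1}"
  then obtain x where x: "x \<in> l2v I" "vnorm x \<le> 1" "r = vnorm (T x)" by blast
  have "K * vnorm x \<le> K * 1" using x(2) K by (rule mult_left_mono)
  thus "r \<le> K" using b[OF x(1)] x(3) by simp
qed

lemma opnorm_ge:
  assumes T: "T \<in> bop I J" and x: "x \<in> l2v I"
  shows "vnorm (T x) \<le> opnorm I T * vnorm x"
proof (cases "vnorm x = 0")
  case True
  hence "x = (\<lambda>_. 0)" using vn2_zero_iff[OF x] by (simp add: vn2_vnorm)
  thus ?thesis using bop_zero[OF T] by (simp add: vnorm_vn2)
next
  case False
  define r where "r = vnorm x"
  have r: "r > 0" using False vn2_nonneg[of x] by (simp add: r_def vnorm_vn2)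
  define x' where "x' = (\<lambda>i. complex_of_real (1 / r) * x i)"
  have x': "x' \<in> l2v I" unfolding x'_def by (rule scale_l2v[OF x])
  have "vn2 x' = (cmod (complex_of_real (1 / r)))^2 * vn2 x" unfolding x'_def by (rule vn2_scale[OF x])
  also have "\<dots> = (1 / r)^2 * vn2 x" using r by (simp only: norm_of_real abs_of_pos) simp
  also have "\<dots> = 1" using r by (simp add: r_def vn2_vnorm field_simps)
  finally have nx': "vnorm x' = 1" by (simp add: vnorm_vn2)
  obtain C where C: "C \<ge> 0" "\<forall>y\<in>l2v I. vn2 (T y) \<le> C * vn2 y" using bop_bound2[OF T] by blast
  have bdd: "bdd_above ((\<lambda>x. vnorm (T x)) ` {x \<in> l2v I. vnorm x \<le> 1})"
  proof (rule bdd_aboveI2)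
    fix y assume y: "y \<in> {x \<in> l2v I. vnorm x \<le> 1}"
    have "0 \<le> vnorm y" by (simp add: vnorm_vn2 vn2_nonneg)
    hence "(vnorm y)^2 \<le> 1" using y by (intro power_le_one) auto
    hence y1: "vn2 y \<le> 1" by (simp add: vn2_vnorm)
    have "vn2 (T y) \<le> C * vn2 y" using C y by simp
    also have "\<dots> \<le> C" using mult_left_le[OF y1 C(1)] .
    finally have "vn2 (T y) \<le> C" .
    thus "vnorm (T y) \<le> sqrt C" by (simp add: vnorm_vn2)
  qed
  have "vnorm (T x') \<le> opnorm I T" unfolding opnorm_def by (rule cSup_upper[OF _ bdd]) (use x' nx' in auto)
  moreover have "T x' = (\<lambda>j. complex_of_real (1 / r) * T x j)" unfolding x'_def by (rule bop_scale[OF T x])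
  moreover have "vnorm (\<lambda>j. complex_of_real (1 / r) * T x j) = vnorm (T x) / r"
  proof -
    have "vn2 (\<lambda>j. complex_of_real (1 / r) * T x j) = (cmod (complex_of_real (1 / r)))^2 * vn2 (T x)"
      by (rule vn2_scale[OF bop_in[OF T x]])
    also have "\<dots> = (1 / r)^2 * vn2 (T x)" using r by (simp only: norm_of_real abs_of_pos) simp
    finally show ?thesis using r by (simp add: vnorm_vn2 real_sqrt_mult)
  qed
  ultimately have "vnorm (T x) / r \<le> opnorm I T" by simp
  thus ?thesis using r by (simp add: r_def divide_simps mult.commute)
qed

lemma tnorm_ge: "opnorm UNIV ((x :: ('d::finite) tup) i) \<le> tnorm x"
  unfolding tnorm_def by (rule Max_ge) auto

lemma tnorm_le: assumes "\<And>i. opnorm UNIV ((x :: ('d::finite) tup) i) \<le> C" shows "tnorm x \<le> C"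
  unfolding tnorm_def using assms by (subst Max_le_iff) auto

lemma dsum_l2v:
  assumes A: "\<And>n. enat n < l \<Longrightarrow> A n \<in> bop UNIV UNIV"
    and K: "K \<ge> 0" and Kb: "\<And>n u. enat n < l \<Longrightarrow> u \<in> l2v UNIV \<Longrightarrow> vn2 (A n u) \<le> K * vn2 u"
    and w: "w \<in> l2v (Hl l)"
  shows "dsum l A w \<in> l2v (Hl l)"
proof -
  let ?h = "\<lambda>p. (cmod (w p))^2"
  let ?g = "\<lambda>p. (cmod (dsum l A w p))^2"
  let ?G = "\<lambda>n. if enat n < l then vn2 (A n (\<lambda>j. w (n,j))) else 0"
  have hs: "?h summable_on Sigma UNIV (\<lambda>_. UNIV)" using l2v_summ[OF w] by simp
  have bs: "(\<lambda>j. ?h (n,j)) summable_on UNIV" for n using l2v_summ[OF prj_summ(1)[OF w, of n]] by simp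
  have ws: "(\<lambda>n. vn2 (\<lambda>j. w (n,j))) summable_on UNIV"
    using summable_on_SigmaD[OF hs bs] by (simp add: vn2_def)
  have Gs: "?G summable_on UNIV"
  proof (rule summable_on_comparison_test[OF summable_on_cmult_right[OF ws, of K]])
    fix n show "?G n \<le> K * vn2 (\<lambda>j. w (n,j))"
      by (cases "enat n < l") (simp_all add: Kb prj_summ(1)[OF w] mult_nonneg_nonneg[OF K vn2_nonneg])
    show "0 \<le> ?G n" by (simp add: vn2_nonneg)
  qed
  have blk: "((\<lambda>j. ?g (n,j)) has_sum ?G n) UNIV" for n
  proof (cases "enat n < l")
    case True
    have "A n (\<lambda>j. w (n,j)) \<in> l2v UNIV" by (rule bop_in[OF A[OF True] prj_summ(1)[OF w]])
    hence "((\<lambda>j. (cmod (A n (\<lambda>j. w (n,j)) j))^2) has_sum vn2 (A n (\<lambda>j. w (n,j)))) UNIV"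
      unfolding vn2_def by (intro has_sum_infsum l2v_summ)
    thus ?thesis using True w by (simp add: dsum_coord)
  next
    case False thus ?thesis using w by (simp add: dsum_coord)
  qed
  have "?g summable_on Sigma UNIV (\<lambda>_. UNIV)" by (rule summable_on_SigmaI[OF blk Gs]) simp
  hence "?g summable_on UNIV" by simp
  moreover have "\<forall>p. p \<notin> Hl l \<longrightarrow> dsum l A w p = 0" using w by (auto simp: dsum_coord)
  ultimately show ?thesis unfolding l2v_iff by blast
qed


lemma vn2_to_vnorm: assumes "vn2 a \<le> M * vn2 b" shows "vnorm a \<le> sqrt M * vnorm b"
  using assms by (simp add: vnorm_vn2 real_sqrt_mult[symmetric])

lemma vnorm_to_vn2: assumes "vnorm a \<le> K * vnorm b" "K \<ge> 0" shows "vn2 a \<le> K^2 * vn2 b"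
proof -
  have "(vnorm a)^2 \<le> (K * vnorm b)^2" using assms by (intro power_mono) (auto simp: vnorm_vn2 vn2_nonneg)
  thus ?thesis by (simp add: vn2_vnorm power_mult_distrib)
qed

lemma partb:
  fixes Om :: "('d::finite) tup set" and f :: "'d tup \<Rightarrow> ('r::finite) tup"
  assumes ex: "exhausting_seq Om Omk" and nc: "nc_function Om f"
    and xsO: "\<And>n. enat n < l \<Longrightarrow> xs n \<in> Om"
    and C: "\<And>n. enat n < l \<Longrightarrow> tnorm (xs n) \<le> C"
    and bs: "binvertible UNIV (Hl l) s" and XO: "tconj l s (tdsum l xs) \<in> Om"
  shows "(\<exists>C. \<forall>n. enat n < l \<longrightarrow> tnorm (f (xs n)) \<le> C)
     \<and> f (tconj l s (tdsum l xs)) = tconj l s (tdsum l (\<lambda>n. f (xs n)))"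
proof -
  define X where "X = tconj l s (tdsum l xs)"
  define si where "si = binv UNIV (Hl l) s"
  have sb: "s \<in> bop UNIV (Hl l)" by (rule binvertible_bop[OF bs])
  have sib: "si \<in> bop (Hl l) UNIV" unfolding si_def by (rule binv_props(1)[OF bs])
  have sis: "\<And>v. v \<in> l2v UNIV \<Longrightarrow> si (s v) = v" unfolding si_def by (rule binv_left[OF bs])
  have ssi: "\<And>w. w \<in> l2v (Hl l) \<Longrightarrow> s (si w) = w" unfolding si_def by (rule binv_right[OF bs])
  have Xi: "X i = si \<circ> dsum l (\<lambda>n. xs n i) \<circ> s" for i by (simp add: X_def tconj_def tdsum_def si_def)
  have XO': "X \<in> Om" using XO by (simp add: X_def)
  have xb: "xs n i \<in> bop UNIV UNIV" if "enat n < l" for n i using Om_bop[OF ex xsO[OF that]] .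
  have fXb: "f X j \<in> bop UNIV UNIV" for j using nc_bop[OF nc XO'] .
  have xK: "vn2 (xs n i u) \<le> (max C 0)^2 * vn2 u" if n: "enat n < l" and u: "u \<in> l2v UNIV" for n i u
  proof -
    have "vnorm (xs n i u) \<le> opnorm UNIV (xs n i) * vnorm u" by (rule opnorm_ge[OF xb[OF n] u])
    also have "\<dots> \<le> max C 0 * vnorm u"
    proof (rule mult_right_mono)
      show "opnorm UNIV (xs n i) \<le> max C 0" using tnorm_ge[of "xs n" i] C[OF n] by linarith
    qed (simp add: vnorm_vn2 vn2_nonneg)
    finally show ?thesis by (rule vnorm_to_vn2) simp
  qed
  have Dl: "dsum l (\<lambda>n. xs n i) w \<in> l2v (Hl l)" if "w \<in> l2v (Hl l)" for i w
    by (rule dsum_l2v[OF xb _ xK that]) simp_all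
  have key: "f (xs n) j (prjb l n (s v)) = prjb l n (s (f X j v))"
    if n: "enat n < l" and v: "v \<in> l2v UNIV" for n j v
  proof -
    have Tb: "prjb l n \<circ> s \<in> bop UNIV UNIV" by (rule bop_comp[OF sb prjb_bop])
    have "f (xs n) j ((prjb l n \<circ> s) v) = (prjb l n \<circ> s) (f X j v)"
    proof (rule intertwine[OF ex nc xsO[OF n] XO' Tb _ v])
      fix i and v' :: vec assume v': "v' \<in> l2v UNIV"
      have sv: "s v' \<in> l2v (Hl l)" by (rule bop_in[OF sb v'])
      have "(prjb l n \<circ> s) (X i v') = prjb l n (dsum l (\<lambda>n. xs n i) (s v'))"
        using ssi[OF Dl[OF sv]] by (simp add: Xi)
      also have "\<dots> = xs n i (prjb l n (s v'))"
        using Dl[OF sv] sv n by (simp add: prjb_in dsum_coord)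
      finally show "xs n i ((prjb l n \<circ> s) v') = (prjb l n \<circ> s) (X i v')" by simp
    qed
    thus ?thesis by simp
  qed
  have "\<forall>j. \<exists>M. 0 \<le> M \<and> (\<forall>w\<in>l2v (Hl l). vn2 ((s \<circ> (f X j \<circ> si)) w) \<le> M * vn2 w)"
    using bop_bound2[OF bop_comp[OF bop_comp[OF sib fXb] sb]] by blast
  from choice[OF this] obtain M where M: "\<And>j. 0 \<le> M j"
    "\<And>j w. w \<in> l2v (Hl l) \<Longrightarrow> vn2 (s (f X j (si w))) \<le> M j * vn2 w" by auto
  have bnd: "tnorm (f (xs n)) \<le> (\<Sum>j\<in>UNIV. sqrt (M j))" if n: "enat n < l" for n
  proof (rule tnorm_le)
    fix j
    have "opnorm UNIV (f (xs n) j) \<le> sqrt (M j)"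
    proof (rule opnorm_le[OF nc_bop[OF nc xsO[OF n]]])
      fix u :: vec assume u: "u \<in> l2v UNIV"
      have iu: "injb n u \<in> l2v (Hl l)" by (rule injb_l2v[OF n u])
      have v0: "si (injb n u) \<in> l2v UNIV" by (rule bop_in[OF sib iu])
      have "prjb l n (s (si (injb n u))) = u" using ssi[OF iu] prjb_injb[OF n u] by simp
      hence "f (xs n) j u = prjb l n (s (f X j (si (injb n u))))" using key[OF n v0, of j] by simp
      hence "vn2 (f (xs n) j u) \<le> vn2 (s (f X j (si (injb n u))))"
        using prj_summ(2)[OF bop_in'[OF sb]] by (simp add: prjb_in[OF bop_in'[OF sb]])
      also have "\<dots> \<le> M j * vn2 (injb n u)" by (rule M(2)[OF iu])
      also have "\<dots> = M j * vn2 u" using injb_vn2[OF u] by simp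
      finally show "vnorm (f (xs n) j u) \<le> sqrt (M j) * vnorm u" by (rule vn2_to_vnorm)
    qed (simp add: M(1))
    also have "\<dots> \<le> (\<Sum>j\<in>UNIV. sqrt (M j))" by (rule member_le_sum) (simp_all add: M(1))
    finally show "opnorm UNIV (f (xs n) j) \<le> (\<Sum>j\<in>UNIV. sqrt (M j))" .
  qed
  have eq: "f X = tconj l s (tdsum l (\<lambda>n. f (xs n)))"
  proof (rule ext, rule ext)
    fix j v
    have R: "tconj l s (tdsum l (\<lambda>n. f (xs n))) j v = si (dsum l (\<lambda>n. f (xs n) j) (s v))"
      by (simp add: tconj_def tdsum_def si_def)
    show "f X j v = tconj l s (tdsum l (\<lambda>n. f (xs n))) j v"
    proof (cases "v \<in> l2v UNIV")
      case True
      have sv: "s v \<in> l2v (Hl l)" by (rule bop_in[OF sb True])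
      have fv: "f X j v \<in> l2v UNIV" by (rule bop_in[OF fXb True])
      have sf: "s (f X j v) \<in> l2v (Hl l)" by (rule bop_in[OF sb fv])
      have "s (f X j v) = dsum l (\<lambda>n. f (xs n) j) (s v)"
      proof (rule ext, clarify)
        fix n i
        show "s (f X j v) (n, i) = dsum l (\<lambda>n. f (xs n) j) (s v) (n, i)"
        proof (cases "enat n < l")
          case True
          have "f (xs n) j (prjb l n (s v)) i = prjb l n (s (f X j v)) i" using key[OF True \<open>v \<in> l2v UNIV\<close>] by simp
          thus ?thesis using True sv sf by (simp add: dsum_coord prjb_in)
        next
          case False
          thus ?thesis using sv l2v_out[OF sf, of "(n,i)"] by (simp add: dsum_coord)
        qed
      qed
      hence "si (s (f X j v)) = si (dsum l (\<lambda>n. f (xs n) j) (s v))" by simp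
      thus ?thesis using sis[OF fv] R by simp
    next
      case False
      have "s v = (\<lambda>_. 0)" by (rule bop_out[OF sb False])
      moreover have "dsum l (\<lambda>n. f (xs n) j) (\<lambda>_. 0) = (\<lambda>_. 0)"
        using bop_zero[OF nc_bop[OF nc xsO]] by (auto simp: dsum_def)
      ultimately show ?thesis using R bop_out[OF fXb False] bop_zero[OF sib] by simp
    qed
  qed
  show ?thesis using bnd eq unfolding X_def by blast
qed


lemma ex_bdd: assumes "exhausting_seq Om Omk" shows "\<exists>C. \<forall>x\<in>Omk k. tnorm x \<le> C"
proof -
  have h: "\<forall>k. \<exists>C. \<forall>x\<in>Omk k. tnorm x \<le> C" using assms unfolding exhausting_seq_def by (elim conjE) assumption
  thus ?thesis by (rule spec)
qed

lemma parta:
  fixes Om :: "('d::finite) tup set" and f :: "'d tup \<Rightarrow> ('r::finite) tup"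
  assumes ex: "exhausting_seq Om Omk" and nc: "nc_function Om f"
  shows "\<exists>C. \<forall>x\<in>Omk k. tnorm (f x) \<le> C"
proof (rule ccontr)
  assume "\<not> (\<exists>C. \<forall>x\<in>Omk k. tnorm (f x) \<le> C)"
  hence ub: "\<forall>C. \<exists>x\<in>Omk k. tnorm (f x) > C" by (meson not_le)
  define xs where "xs = (\<lambda>n::nat. SOME x. x \<in> Omk k \<and> tnorm (f x) > real n)"
  have xs: "xs n \<in> Omk k \<and> tnorm (f (xs n)) > real n" for n
  proof -
    have "\<exists>x. x \<in> Omk k \<and> tnorm (f x) > real n" using ub by blast
    thus ?thesis unfolding xs_def by (rule someI_ex)
  qed
  have "\<exists>u. unitary_op UNIV (Hl \<infinity>) u \<and> tconj \<infinity> u (tdsum \<infinity> xs) \<in> Omk k"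
    by (rule ex_ds[OF ex]) (use xs in auto)
  then obtain u where u: "unitary_op UNIV (Hl \<infinity>) u" "tconj \<infinity> u (tdsum \<infinity> xs) \<in> Omk k" by blast
  obtain Cb where Cb: "\<forall>x\<in>Omk k. tnorm x \<le> Cb" using ex_bdd[OF ex] by blast
  have "(\<exists>C. \<forall>n. enat n < \<infinity> \<longrightarrow> tnorm (f (xs n)) \<le> C)"
  proof (rule conjunct1[OF partb[OF ex nc]])
    show "\<And>n. enat n < \<infinity> \<Longrightarrow> xs n \<in> Om" using xs ex_sub[OF ex] by blast
    show "\<And>n. enat n < \<infinity> \<Longrightarrow> tnorm (xs n) \<le> Cb" using xs Cb by blast
    show "binvertible UNIV (Hl \<infinity>) u" by (rule unitary_binvertible[OF u(1)])
    show "tconj \<infinity> u (tdsum \<infinity> xs) \<in> Om" using u(2) ex_sub[OF ex] by blast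
  qed
  then obtain C where C: "\<And>n. tnorm (f (xs n)) \<le> C" by auto
  obtain n :: nat where "real n > C" using reals_Archimedean2 by blast
  thus False using C[of n] xs[of n] by linarith
qed

theorem mainTheorem8:
  fixes Om :: "('d::finite) tup set" and Omk :: "nat \<Rightarrow> 'd tup set"
    and f :: "'d tup \<Rightarrow> ('r::finite) tup"
  assumes "exhausting_seq Om Omk" and "nc_function Om f"
  shows "(\<forall>k. \<exists>C. \<forall>x\<in>Omk k. tnorm (f x) \<le> C)
    \<and> (\<forall>(l::enat) (xs :: nat \<Rightarrow> 'd tup) s. l \<noteq> 0 \<longrightarrow>
         (\<forall>n. enat n < l \<longrightarrow> xs n \<in> Om) \<longrightarrow>
         (\<exists>C. \<forall>n. enat n < l \<longrightarrow> tnorm (xs n) \<le> C) \<longrightarrow>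
         binvertible UNIV (Hl l) s \<longrightarrow>
         tconj l s (tdsum l xs) \<in> Om \<longrightarrow>
         (\<exists>C. \<forall>n. enat n < l \<longrightarrow> tnorm (f (xs n)) \<le> C)
         \<and> f (tconj l s (tdsum l xs)) = tconj l s (tdsum l (\<lambda>n. f (xs n))))"
proof (intro conjI allI impI)
  fix k show "\<exists>C. \<forall>x\<in>Omk k. tnorm (f x) \<le> C" by (rule parta[OF assms])
next
  fix l :: enat and xs :: "nat \<Rightarrow> 'd tup" and s
  assume xsO: "\<forall>n. enat n < l \<longrightarrow> xs n \<in> Om" and Cx: "\<exists>C. \<forall>n. enat n < l \<longrightarrow> tnorm (xs n) \<le> C"
    and bs: "binvertible UNIV (Hl l) s" and XO: "tconj l s (tdsum l xs) \<in> Om"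
  from Cx obtain C where C: "\<And>n. enat n < l \<Longrightarrow> tnorm (xs n) \<le> C" by blast
  have r: "(\<exists>C. \<forall>n. enat n < l \<longrightarrow> tnorm (f (xs n)) \<le> C)
     \<and> f (tconj l s (tdsum l xs)) = tconj l s (tdsum l (\<lambda>n. f (xs n)))"
    by (rule partb[OF assms _ C bs XO]) (use xsO in blast)
  show "\<exists>C. \<forall>n. enat n < l \<longrightarrow> tnorm (f (xs n)) \<le> C" using r by (rule conjunct1)
  show "f (tconj l s (tdsum l xs)) = tconj l s (tdsum l (\<lambda>n. f (xs n)))" using r by (rule conjunct2)
qed

end
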